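(* Let $\mathcal{M}\subseteq\mathbb{S}^n$ be compact. Then $\mathcal{S}(\mathcal{M})$ is rank-one generated if and only if $\mathcal{S}(\mathcal{M})\cap\mathcal{T}(\mathcal{M}')$ is rank-one generated for every nonempty $\mathcal{M}'\subseteq\mathcal{M}$.
   Context: $\mathbb{S}^n$ denotes real symmetric $n\times n$ matrices with $\langle A,B\rangle=\mathrm{tr}(AB)$, $\mathbb{S}^n_+$ the PSD cone. For $\mathcal{M}\subseteq\mathbb{S}^n$, $\mathcal{S}(\mathcal{M})=\{X\in\mathbb{S}^n_+:\langle M,X\rangle\ge0\ \forall M\in\mathcal{M}\}$ and $\mathcal{T}(\mathcal{M})=\{X\in\mathbb{S}^n_+:\langle M,X\rangle=0\ \forall M\in\mathcal{M}\}$. A closed convex cone $\mathcal{S}\subseteq\mathbb{S}^n_+$ is rank-one generated (ROG) if $\mathcal{S}=\mathrm{conv}(\mathcal{S}\cap\{xx^\top:x\in\mathbb{R}^n\})$. *)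

theory Defs
  imports "HOL-Analysis.Analysis"
begin

type_synonym 'n mat = "real^'n^'n"

definition sym_mats :: "'n::finite mat set" where
  "sym_mats = {A. transpose A = A}"

definition psd_cone :: "'n::finite mat set" where
  "psd_cone = {X. transpose X = X \<and> (\<forall>x::real^'n. 0 \<le> x \<bullet> (X *v x))}"

definition frob :: "'n::finite mat \<Rightarrow> 'n mat \<Rightarrow> real" where
  "frob A B = trace (A ** B)"

definition outer :: "real^'n \<Rightarrow> real^'n^'n" where
  "outer x = (\<chi> i j. x $ i * x $ j)"

definition rank_one_mats :: "'n::finite mat set" where
  "rank_one_mats = range outer"

definition Scone :: "'n::finite mat set \<Rightarrow> 'n mat set" where
  "Scone M = {X \<in> psd_cone. \<forall>A\<in>M. frob A X \<ge> 0}"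

definition Tcone :: "'n::finite mat set \<Rightarrow> 'n mat set" where
  "Tcone M = {X \<in> psd_cone. \<forall>A\<in>M. frob A X = 0}"

definition ROG :: "'n::finite mat set \<Rightarrow> bool" where
  "ROG S \<longleftrightarrow> closed S \<and> convex S \<and> cone S \<and> S \<subseteq> psd_cone
     \<and> S = convex hull (S \<inter> rank_one_mats)"

end

theory Submission
  imports Defs
begin

lemma inner_mv: "(y::real^'n) \<bullet> (X *v x) = (\<Sum>i\<in>UNIV. \<Sum>j\<in>UNIV. y$i * X$i$j * x$j)"
  by (simp add: inner_vec_def matrix_vector_mult_def sum_distrib_left mult.assoc)

lemma frob_eq: "frob A B = (\<Sum>i\<in>UNIV. \<Sum>k\<in>UNIV. A$i$k * B$k$i)"
  by (simp add: frob_def trace_def matrix_matrix_mult_def)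

lemma linear_frob2: "linear (frob A)"
  by (rule linearI) (simp_all add: frob_eq sum.distrib sum_distrib_left algebra_simps)

lemma linear_frob1: "linear (\<lambda>A. frob A B)"
  by (rule linearI) (simp_all add: frob_eq sum.distrib sum_distrib_left algebra_simps)

lemma linear_qf: "linear (\<lambda>X. (x::real^'n) \<bullet> (X *v x))"
  by (rule linearI) (simp_all add: inner_mv sum.distrib sum_distrib_left algebra_simps)

lemma frob_uminus: "frob (-A) B = - frob A B"
  by (simp add: frob_eq sum_negf)

lemma lin_cont: "linear (f::'a::euclidean_space \<Rightarrow> 'b::real_normed_vector) \<Longrightarrow> continuous_on S f"
  by (simp add: linear_continuous_on linear_conv_bounded_linear)

lemma closed_sym: "closed {X::real^'n^'n. transpose X = X}"
proof -
  have "{X::real^'n^'n. transpose X = X} = (\<Inter>i. \<Inter>j. {X. X$i$j = X$j$i})"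
    by (auto simp: transpose_def vec_eq_iff)
  also have "closed \<dots>"
    by (intro closed_INT ballI closed_Collect_eq continuous_on_component continuous_on_id)
  finally show ?thesis .
qed

lemma closed_psd: "closed (psd_cone :: 'n::finite mat set)"
proof -
  have "psd_cone = {X::'n mat. transpose X = X} \<inter> (\<Inter>x. {X. 0 \<le> (x::real^'n) \<bullet> (X *v x)})"
    by (auto simp: psd_cone_def)
  also have "closed \<dots>"
    by (intro closed_Int closed_sym closed_INT ballI closed_Collect_le continuous_on_const
       lin_cont linear_qf)
  finally show ?thesis .
qed

lemma closed_Scone: "closed (Scone N)"
proof -
  have "Scone N = psd_cone \<inter> (\<Inter>A\<in>N. {X. 0 \<le> frob A X})"
    by (auto simp: Scone_def)
  also have "closed \<dots>"
    by (intro closed_Int closed_psd closed_INT ballI closed_Collect_le continuous_on_const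
       lin_cont linear_frob2)
  finally show ?thesis .
qed

lemma psd_add: "X \<in> psd_cone \<Longrightarrow> Y \<in> psd_cone \<Longrightarrow> X + Y \<in> psd_cone"
proof -
  assume a: "X \<in> psd_cone" "Y \<in> psd_cone"
  have t: "transpose (X+Y) = transpose X + transpose Y" by (simp add: transpose_def vec_eq_iff)
  have "0 \<le> x \<bullet> ((X+Y) *v x)" for x
    using a unfolding psd_cone_def
    by (simp add: matrix_vector_mult_add_rdistrib inner_add_right add_nonneg_nonneg)
  then show ?thesis using a t unfolding psd_cone_def by simp
qed

lemma psd_scale: "X \<in> psd_cone \<Longrightarrow> 0 \<le> c \<Longrightarrow> c *\<^sub>R X \<in> psd_cone"
proof -
  assume a: "X \<in> psd_cone" "0 \<le> c"
  have "(c *\<^sub>R X) *v x = c *\<^sub>R (X *v x)" for x by (simp add: scaleR_matrix_vector_assoc)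
  then show ?thesis using a by (auto simp: psd_cone_def transpose_scalar)
qed

lemma frob_add: "frob A (X + Y) = frob A X + frob A Y"
  using linear_frob2[of A] by (simp add: linear_add)
lemma frob_scale: "frob A (c *\<^sub>R X) = c * frob A X"
  using linear_frob2[of A] by (simp add: linear_scale)
lemma frob_diff: "frob A (X - Y) = frob A X - frob A Y"
  using linear_frob2[of A] by (simp add: linear_diff)

lemma convex_Scone: "convex (Scone N)"
  unfolding convex_def Scone_def
  by (auto simp: frob_add frob_scale intro!: psd_add psd_scale)

lemma cone_Scone: "cone (Scone N)"
  unfolding cone_def Scone_def
  by (auto simp: frob_scale intro!: psd_scale)

lemma Scone_Tcone: "Scone M \<inter> Tcone M' = Scone (M \<union> M' \<union> uminus ` M')"
proof (rule set_eqI)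
  fix X
  show "X \<in> Scone M \<inter> Tcone M' \<longleftrightarrow> X \<in> Scone (M \<union> M' \<union> uminus ` M')"
  proof
    assume "X \<in> Scone M \<inter> Tcone M'"
    then show "X \<in> Scone (M \<union> M' \<union> uminus ` M')"
      unfolding Scone_def Tcone_def by (auto simp: frob_uminus)
  next
    assume a: "X \<in> Scone (M \<union> M' \<union> uminus ` M')"
    have "frob A X = 0" if "A \<in> M'" for A
    proof -
      have "0 \<le> frob A X" "0 \<le> frob (-A) X" using a that unfolding Scone_def by auto
      then show ?thesis by (simp add: frob_uminus)
    qed
    then show "X \<in> Scone M \<inter> Tcone M'" using a unfolding Scone_def Tcone_def by auto
  qed
qed


lemma outer_mv: "outer v *v x = (v \<bullet> x) *\<^sub>R v"
  by (simp add: outer_def matrix_vector_mult_def inner_vec_def vec_eq_iff sum_distrib_left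
      sum_distrib_right algebra_simps)

lemma outer_transpose: "transpose (outer v) = outer v"
  by (simp add: outer_def transpose_def vec_eq_iff mult.commute)

lemma qf_outer: "x \<bullet> (outer v *v x) = (v \<bullet> x)^2"
  by (simp add: outer_mv power2_eq_square inner_commute)

lemma outer_psd: "outer v \<in> psd_cone"
  by (simp add: psd_cone_def outer_transpose qf_outer)

lemma zero_psd: "0 \<in> psd_cone"
  by (simp add: psd_cone_def transpose_def vec_eq_iff)

lemma sum_outer_psd: "sum_list (map outer vs) \<in> psd_cone"
  by (induction vs) (simp_all add: zero_psd psd_add outer_psd)

lemma quad_lemma:
  fixes q r d :: real
  assumes h: "\<And>t. 0 \<le> q - 2*t*r + t^2*d" and d: "0 \<le> d"
  shows "r^2 \<le> d*q"
proof (cases "d = 0")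
  case True
  show ?thesis
  proof (cases "r = 0")
    case False
    have "0 \<le> q - 2*((q+1)/(2*r))*r + ((q+1)/(2*r))^2*d" by (rule h)
    with True False show ?thesis by (simp add: field_simps)
  qed (use True h[of 0] in simp)
next
  case False
  then have dp: "d > 0" using d by simp
  have "0 \<le> q - 2*(r/d)*r + (r/d)^2*d" by (rule h)
  also have "\<dots> = (d*q - r^2)/d" using dp by (simp add: field_simps power2_eq_square)
  finally have "0 \<le> d*q - r^2" using dp by (simp add: zero_le_divide_iff)
  then show ?thesis by simp
qed

lemma sym_swap:
  assumes "transpose X = X"
  shows "x \<bullet> (X *v y) = y \<bullet> ((X::real^'n^'n) *v x)"
proof -
  have "y \<bullet> (X *v x) = (y v* X) \<bullet> x" by (simp add: dot_lmul_matrix)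
  also have "y v* X = X *v y" using vector_transpose_matrix[of y X] assms by simp
  finally show ?thesis by (simp add: inner_commute)
qed

lemma mv_axis: "(X *v axis i 1) $ j = (X::real^'n^'n) $ j $ i"
  by (simp add: matrix_vector_mult_def axis_def if_distrib cong: if_cong)

lemma axis_inner: "axis i 1 \<bullet> (w::real^'n) = w $ i"
  by (simp add: inner_axis')

lemma psd_CS:
  fixes X :: "real^'n^'n"
  assumes "X \<in> psd_cone"
  shows "((X *v x) $ i)^2 \<le> X$i$i * (x \<bullet> (X *v x))"
proof -
  have sym: "transpose X = X" and pos: "\<And>y. 0 \<le> y \<bullet> (X *v y)" using assms by (auto simp: psd_cone_def)
  let ?e = "axis i 1 :: real^'n"
  have "0 \<le> x \<bullet> (X *v x) - 2*t*((X *v x) $ i) + t^2 * X$i$i" for t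
  proof -
    have "0 \<le> (x - t *\<^sub>R ?e) \<bullet> (X *v (x - t *\<^sub>R ?e))" by (rule pos)
    also have "\<dots> = x \<bullet> (X *v x) - t * (?e \<bullet> (X *v x)) - t * (x \<bullet> (X *v ?e))
        + t^2 * (?e \<bullet> (X *v ?e))"
      by (simp add: matrix_vector_mult_diff_distrib inner_diff_left inner_diff_right
          scaleR_matrix_vector_assoc[symmetric] power2_eq_square algebra_simps)
    also have "x \<bullet> (X *v ?e) = ?e \<bullet> (X *v x)" by (rule sym_swap[OF sym])
    finally show ?thesis by (simp add: axis_inner mv_axis algebra_simps)
  qed
  moreover have "0 \<le> X$i$i" using pos[of ?e] by (simp add: axis_inner mv_axis)
  ultimately show ?thesis by (intro quad_lemma) auto
qed

lemma psd_diag: "X \<in> psd_cone \<Longrightarrow> 0 \<le> X$i$i"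
  unfolding psd_cone_def using axis_inner[of i] mv_axis[of X i i]
  by (metis (no_types, lifting) mem_Collect_eq)

lemma psd_zero_diag:
  assumes "X \<in> psd_cone" "X$i$i = 0"
  shows "X$i$j = 0"
  using psd_CS[OF assms(1), of "axis j 1" i] assms(2) by (simp add: mv_axis)


lemma transpose_diff: "transpose (A - B) = transpose A - transpose (B::real^'n^'n)"
  by (simp add: transpose_def vec_eq_iff)

lemma psd_decomp:
  fixes X :: "real^'n^'n"
  shows "X \<in> psd_cone \<Longrightarrow> \<exists>vs. X = sum_list (map outer vs)"
proof (induction "card {i. X$i$i \<noteq> 0}" arbitrary: X rule: less_induct)
  case less
  show ?case
  proof (cases "\<exists>i. X$i$i \<noteq> 0")
    case False
    then have "X = 0" using psd_zero_diag[OF less.prems] by (simp add: vec_eq_iff)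
    then show ?thesis by (intro exI[of _ "[]"]) simp
  next
    case True
    then obtain i where i: "X$i$i \<noteq> 0" by blast
    define d where "d = X$i$i"
    have dp: "d > 0" using psd_diag[OF less.prems, of i] i d_def by simp
    define v where "v = (\<chi> j. X$i$j / sqrt d)"
    define X' where "X' = X - outer v"
    have sym: "transpose X = X" using less.prems psd_cone_def by auto
    have symij: "X$j$k = X$k$j" for j k using sym
      by (metis transpose_def vec_lambda_beta)
    have ov: "v \<bullet> x = (X *v x)$i / sqrt d" for x
      by (simp add: v_def inner_vec_def matrix_vector_mult_def sum_divide_distrib mult.commute)
    have qf: "0 \<le> x \<bullet> (X' *v x)" for x
    proof -
      have "x \<bullet> (X' *v x) = x \<bullet> (X *v x) - ((X *v x)$i)^2 / d"
        using dp by (simp add: X'_def matrix_vector_mult_diff_rdistrib inner_diff_right qf_outer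
            ov power_divide)
      moreover have "((X *v x)$i)^2 \<le> d * (x \<bullet> (X *v x))"
        using psd_CS[OF less.prems] d_def by simp
      ultimately have "0 \<le> d * (x \<bullet> (X' *v x))" using dp by (simp add: field_simps)
      then show ?thesis using dp by (simp add: zero_le_mult_iff)
    qed
    have X'psd: "X' \<in> psd_cone"
      using qf sym unfolding psd_cone_def X'_def by (simp add: transpose_diff outer_transpose)
    have diag: "X'$j$j = X$j$j - (X$i$j)^2/d" for j
      using dp by (simp add: X'_def outer_def v_def power_divide power2_eq_square)
    have sub: "{j. X'$j$j \<noteq> 0} \<subseteq> {j. X$j$j \<noteq> 0} - {i}"
    proof
      fix j assume j: "j \<in> {j. X'$j$j \<noteq> 0}"
      have "j \<noteq> i" using j diag[of i] dp d_def by (auto simp: power2_eq_square)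
      moreover have "X$j$j \<noteq> 0"
      proof
        assume "X$j$j = 0"
        then have "X$j$i = 0" using psd_zero_diag[OF less.prems] by blast
        then have "X$i$j = 0" using symij by simp
        then show False using j diag[of j] \<open>X$j$j = 0\<close> by simp
      qed
      ultimately show "j \<in> {j. X$j$j \<noteq> 0} - {i}" by simp
    qed
    have "card {j. X'$j$j \<noteq> 0} < card {i. X$i$i \<noteq> 0}"
    proof (rule psubset_card_mono)
      show "finite {i. X$i$i \<noteq> 0}" by simp
      show "{j. X'$j$j \<noteq> 0} \<subset> {i. X$i$i \<noteq> 0}" using sub i by blast
    qed
    then obtain vs where "X' = sum_list (map outer vs)" using less.hyps X'psd by blast
    moreover have "X = outer v + X'" unfolding X'_def by simp
    ultimately have "X = sum_list (map outer (v # vs))" by simp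
    then show ?thesis by blast
  qed
qed


lemma seg:
  fixes M :: "(real^'n^'n) set"
  assumes cM: "compact M" and Ypsd: "Y \<in> psd_cone" and Zpsd: "Z \<in> psd_cone"
    and mid: "Z + (1/2) *\<^sub>R (Y - Z) \<in> Scone M"
  shows "\<exists>a. 0 \<le> a \<and> a \<le> 1/2 \<and> Z + a *\<^sub>R (Y - Z) \<in> Scone M \<and>
     (a = 0 \<or> (\<exists>A\<in>M. frob A (Z + a *\<^sub>R (Y - Z)) = 0))"
proof -
  define c where "c A = frob A Z" for A
  define g where "g A = frob A (Y - Z)" for A
  have P_psd: "Z + s *\<^sub>R (Y - Z) \<in> psd_cone" if "0 \<le> s" "s \<le> 1" for s
  proof -
    have "Z + s *\<^sub>R (Y - Z) = (1 - s) *\<^sub>R Z + s *\<^sub>R Y" by (simp add: algebra_simps)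
    then show ?thesis using that by (simp add: psd_add psd_scale Ypsd Zpsd)
  qed
  have fr: "frob A (Z + s *\<^sub>R (Y - Z)) = c A + s * g A" for A s
    by (simp add: c_def g_def frob_add frob_scale)
  define I where "I = {s. 0 \<le> s \<and> s \<le> 1/2 \<and> (\<forall>A\<in>M. 0 \<le> c A + s * g A)}"
  have memI: "s \<in> I \<longleftrightarrow> 0 \<le> s \<and> s \<le> 1/2 \<and> Z + s *\<^sub>R (Y - Z) \<in> Scone M" for s
    using P_psd[of s] unfolding I_def Scone_def by (auto simp: fr)
  have half: "1/2 \<in> I" using memI mid by simp
  have cc: "continuous_on M c" "continuous_on M g"
    unfolding c_def g_def by (intro lin_cont linear_frob1)+
  have "I = {0..1/2} \<inter> (\<Inter>A\<in>M. {s. 0 \<le> c A + s * g A})"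
    unfolding I_def by auto
  also have "closed \<dots>"
    by (intro closed_Int closed_atLeastAtMost closed_INT ballI closed_Collect_le continuous_intros)
  finally have closedI: "closed I" .
  have bdd: "bdd_below I" unfolding I_def by (rule bdd_belowI[of _ 0]) auto
  define a where "a = Inf I"
  have aI: "a \<in> I" unfolding a_def using closed_contains_Inf[OF _ bdd closedI] half by blast
  have a_le: "a \<le> s" if "s \<in> I" for s unfolding a_def by (rule cInf_lower[OF that bdd])
  show ?thesis
  proof (cases "a = 0 \<or> (\<exists>A\<in>M. c A + a * g A = 0)")
    case True
    then show ?thesis using aI memI[of a] fr by metis
  next
    case False
    have a0: "a > 0" using False aI unfolding I_def by auto
    have pos: "c A + a * g A > 0" if "A \<in> M" for A
      using False aI that unfolding I_def by force
    have "\<exists>s\<in>I. s < a"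
    proof (cases "M = {}")
      case True
      then have "0 \<in> I" unfolding I_def by simp
      then show ?thesis using a0 by blast
    next
      case False
      have "continuous_on M (\<lambda>A. c A + a * g A)" using cc by (intro continuous_intros)
      then obtain A0 where A0: "A0 \<in> M" "\<And>A. A \<in> M \<Longrightarrow> c A0 + a * g A0 \<le> c A + a * g A"
        using continuous_attains_inf[OF cM False, of "\<lambda>A. c A + a * g A"] by blast
      define \<delta> where "\<delta> = c A0 + a * g A0"
      have \<delta>0: "\<delta> > 0" using pos[OF A0(1)] \<delta>_def by simp
      have "bounded (g ` M)" by (intro compact_imp_bounded compact_continuous_image cc cM)
      then obtain C where C: "\<And>A. A \<in> M \<Longrightarrow> \<bar>g A\<bar> \<le> C" unfolding bounded_real by blast
      define s where "s = max 0 (a - \<delta> / (\<bar>C\<bar> + 1))"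
      have sa: "s < a" unfolding s_def using a0 \<delta>0 by (simp add: field_simps)
      have s0: "0 \<le> s" unfolding s_def by simp
      have as: "a - s \<le> \<delta> / (\<bar>C\<bar> + 1)" "0 \<le> a - s" unfolding s_def using sa s_def by auto
      have "0 \<le> c A + s * g A" if A: "A \<in> M" for A
      proof -
        have "(a - s) * g A \<le> (a - s) * \<bar>g A\<bar>" using as(2) by (intro mult_left_mono) auto
        also have "\<dots> \<le> \<delta> / (\<bar>C\<bar> + 1) * \<bar>C\<bar>"
          using as C[OF A] \<delta>0 by (intro mult_mono) auto
        also have "\<dots> \<le> \<delta>" using \<delta>0 by (simp add: field_simps)
        also have "\<delta> \<le> c A + a * g A" using A0(2)[OF A] \<delta>_def by simp
        finally show ?thesis by (simp add: algebra_simps)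
      qed
      then have "s \<in> I" using s0 sa aI unfolding I_def by auto
      then show ?thesis using sa by blast
    qed
    then show ?thesis using a_le by force
  qed
qed


lemma outer_scale:
  assumes c: "0 \<le> c" shows "c *\<^sub>R outer w = outer (sqrt c *\<^sub>R w)"
proof -
  have s: "sqrt c * sqrt c = c" using c by simp
  have "sqrt c * w$i * (sqrt c * w$j) = (sqrt c * sqrt c) * (w$i * w$j)" for i j
    by (simp add: mult_ac)
  then show ?thesis by (simp add: outer_def vec_eq_iff s abs_of_nonneg c)
qed

lemma grp_aux: "Z = b + b \<Longrightarrow> Z + (a - b) = a + (b::'a::ab_group_add)"
  by (simp add: algebra_simps)

lemma half_eq: "(Z::'a::real_vector) + (1/2) *\<^sub>R (Y - Z) = (1/2) *\<^sub>R (Y + Z)"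
proof -
  have h: "Z = (1/2) *\<^sub>R Z + (1/2) *\<^sub>R Z"
    using scaleR_left_distrib[of "1/2" "1/2" Z] by simp
  show ?thesis unfolding scaleR_add_right scaleR_diff_right by (rule grp_aux[OF h])
qed

lemma Scone_scale: "X \<in> Scone N \<Longrightarrow> 0 \<le> c \<Longrightarrow> c *\<^sub>R X \<in> Scone N"
  using cone_Scone[of N] unfolding cone_def by blast

lemma hull_scale2:
  fixes M :: "(real^'n^'n) set"
  assumes "X \<in> convex hull (Scone M \<inter> rank_one_mats)"
  shows "2 *\<^sub>R X \<in> convex hull (Scone M \<inter> rank_one_mats)"
proof -
  let ?K = "Scone M \<inter> rank_one_mats"
  have "(*\<^sub>R) 2 ` ?K \<subseteq> ?K"
  proof
    fix W assume "W \<in> (*\<^sub>R) (2::real) ` ?K"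
    then obtain w where w: "outer w \<in> Scone M" "W = 2 *\<^sub>R outer w"
      unfolding rank_one_mats_def by auto
    have "W \<in> Scone M" using w Scone_scale[of "outer w" M 2] by simp
    moreover have "W = outer (sqrt 2 *\<^sub>R w)" using w outer_scale[of 2 w] by simp
    ultimately show "W \<in> ?K" unfolding rank_one_mats_def by simp
  qed
  then have "convex hull ((*\<^sub>R) 2 ` ?K) \<subseteq> convex hull ?K" by (rule hull_mono[THEN order_trans]) (rule order_refl)
  moreover have "2 *\<^sub>R X \<in> convex hull ((*\<^sub>R) 2 ` ?K)"
    unfolding convex_hull_scaling using assms by blast
  ultimately show ?thesis by blast
qed

lemma frob_zero: "frob A 0 = 0"
  by (simp add: frob_eq)

lemma frob_sum: "frob A (\<Sum>v\<in>S. u v *\<^sub>R v) = (\<Sum>v\<in>S. u v * frob A v)"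
  by (induction S rule: infinite_finite_induct) (simp_all add: frob_add frob_scale frob_zero)

lemma ROG_intro:
  assumes "closed S" "convex S" "cone S" "S \<subseteq> psd_cone" "S \<subseteq> convex hull (S \<inter> rank_one_mats)"
  shows "ROG S"
proof -
  have "convex hull (S \<inter> rank_one_mats) \<subseteq> S" using assms(2) by (intro hull_minimal) auto
  then have "S = convex hull (S \<inter> rank_one_mats)" using assms(5) by (rule subset_antisym[rotated])
  then show ?thesis unfolding ROG_def using assms(1-4) by (intro conjI)
qed

lemma ROG_D:
  assumes "ROG S" "X \<in> S"
  shows "X \<in> convex hull (S \<inter> rank_one_mats)"
proof -
  have "S \<subseteq> convex hull (S \<inter> rank_one_mats)"
    using assms(1) unfolding ROG_def by (elim conjE equalityE)
  then show ?thesis using assms(2) by (rule subsetD)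
qed

lemma list_main:
  fixes M :: "(real^'n^'n) set"
  assumes cM: "compact M"
    and hyp: "\<forall>M'. M' \<noteq> {} \<and> M' \<subseteq> M \<longrightarrow> ROG (Scone M \<inter> Tcone M')"
  shows "sum_list (map outer vs) \<in> Scone M \<Longrightarrow>
     sum_list (map outer vs) \<in> convex hull (Scone M \<inter> rank_one_mats)"
proof (induction vs)
  case Nil
  have "(0::real^'n^'n) = outer 0" by (simp add: outer_def vec_eq_iff)
  then have "(0::real^'n^'n) \<in> rank_one_mats" unfolding rank_one_mats_def by simp
  then show ?case using Nil by (simp add: hull_inc)
next
  case (Cons v vs)
  let ?K = "Scone M \<inter> rank_one_mats"
  let ?H = "convex hull ?K"
  define Y where "Y = outer v"
  define Z where "Z = sum_list (map outer vs)"
  have X: "Y + Z \<in> Scone M" using Cons.prems by (simp add: Y_def Z_def)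
  have bd: "W \<in> ?H" if W: "W \<in> Scone M" "A \<in> M" "frob A W = 0" for W A
  proof -
    have R: "ROG (Scone M \<inter> Tcone {A})" using hyp W(2) by auto
    have "W \<in> Scone M \<inter> Tcone {A}" using W unfolding Tcone_def Scone_def by auto
    then have "W \<in> convex hull (Scone M \<inter> Tcone {A} \<inter> rank_one_mats)"
      by (rule ROG_D[OF R])
    also have "\<dots> \<subseteq> ?H" by (rule hull_mono) blast
    finally show ?thesis .
  qed
  have Ypsd: "Y \<in> psd_cone" by (simp add: Y_def outer_psd)
  have Zpsd: "Z \<in> psd_cone" by (simp add: Z_def sum_outer_psd)
  have m1: "Z + (1/2) *\<^sub>R (Y - Z) = (1/2) *\<^sub>R (Y + Z)" by (rule half_eq)
  have m2: "Y + (1/2) *\<^sub>R (Z - Y) = (1/2) *\<^sub>R (Y + Z)" using half_eq[of Y Z] by (simp add: add.commute)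
  have mid: "(1/2) *\<^sub>R (Y + Z) \<in> Scone M" using Scone_scale[OF X, of "1/2"] by simp
  obtain a where a: "0 \<le> a" "a \<le> 1/2" "Z + a *\<^sub>R (Y - Z) \<in> Scone M"
    "a = 0 \<or> (\<exists>A\<in>M. frob A (Z + a *\<^sub>R (Y - Z)) = 0)"
    using seg[OF cM Ypsd Zpsd] mid m1 by metis
  obtain a' where a': "0 \<le> a'" "a' \<le> 1/2" "Y + a' *\<^sub>R (Z - Y) \<in> Scone M"
    "a' = 0 \<or> (\<exists>A\<in>M. frob A (Y + a' *\<^sub>R (Z - Y)) = 0)"
    using seg[OF cM Zpsd Ypsd] mid m2 by metis
  have Pa: "Z + a *\<^sub>R (Y - Z) \<in> ?H"
  proof (cases "a = 0")
    case True
    then have "Z \<in> Scone M" using a by simp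
    then have "Z \<in> ?H" using Cons.IH Z_def by simp
    then show ?thesis using True by simp
  next
    case False
    then show ?thesis using a bd by blast
  qed
  define b where "b = 1 - a'"
  have Pb_eq: "Y + a' *\<^sub>R (Z - Y) = Z + b *\<^sub>R (Y - Z)" by (simp add: b_def algebra_simps)
  have Pb: "Z + b *\<^sub>R (Y - Z) \<in> ?H"
  proof (cases "a' = 0")
    case True
    then have "Y \<in> ?K" using a' unfolding rank_one_mats_def Y_def by simp
    then have "Y \<in> ?H" by (simp add: hull_inc)
    then show ?thesis using True Pb_eq by simp
  next
    case False
    then show ?thesis using a' bd Pb_eq by metis
  qed
  have ab: "a \<le> 1/2" "1/2 \<le> b" using a a' b_def by auto
  have midH: "Z + (1/2) *\<^sub>R (Y - Z) \<in> ?H"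
  proof (cases "a = b")
    case True
    then have "a = 1/2" using ab by simp
    with Pa show ?thesis by (simp only:)
  next
    case False
    then have ba: "b - a > 0" using ab by simp
    define \<mu> where "\<mu> = (1/2 - a) / (b - a)"
    have \<mu>: "0 \<le> \<mu>" "\<mu> \<le> 1" using ab ba by (auto simp: \<mu>_def divide_le_eq)
    have e: "\<mu> * (b - a) = 1/2 - a" using ba by (simp add: \<mu>_def)
    have "(1 - \<mu>) * a + \<mu> * b = a + \<mu> * (b - a)" by (simp add: algebra_simps)
    then have co: "(1 - \<mu>) * a + \<mu> * b = 1/2" using e by simp
    have "(1 - \<mu>) *\<^sub>R (Z + a *\<^sub>R (Y - Z)) + \<mu> *\<^sub>R (Z + b *\<^sub>R (Y - Z))
        = Z + ((1 - \<mu>) * a + \<mu> * b) *\<^sub>R (Y - Z)"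
      by (simp add: algebra_simps)
    also have "\<dots> = Z + (1/2) *\<^sub>R (Y - Z)" using co by simp
    finally have eq: "(1 - \<mu>) *\<^sub>R (Z + a *\<^sub>R (Y - Z)) + \<mu> *\<^sub>R (Z + b *\<^sub>R (Y - Z))
        = Z + (1/2) *\<^sub>R (Y - Z)" .
    have "(1 - \<mu>) *\<^sub>R (Z + a *\<^sub>R (Y - Z)) + \<mu> *\<^sub>R (Z + b *\<^sub>R (Y - Z)) \<in> ?H"
      using \<mu> Pa Pb by (intro convexD[OF convex_convex_hull]) auto
    then show ?thesis using eq by simp
  qed
  have "2 *\<^sub>R (Z + (1/2) *\<^sub>R (Y - Z)) \<in> ?H" by (rule hull_scale2[OF midH])
  moreover have "2 *\<^sub>R (Z + (1/2) *\<^sub>R (Y - Z)) = sum_list (map outer (v # vs))"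
    unfolding m1 by (simp add: Y_def Z_def)
  ultimately show ?case by simp
qed

theorem lemma2p13:
  fixes M :: "(real^'n^'n) set"
  assumes "M \<subseteq> sym_mats" and "compact M"
  shows "ROG (Scone M) \<longleftrightarrow>
    (\<forall>M'. M' \<noteq> {} \<and> M' \<subseteq> M \<longrightarrow> ROG (Scone M \<inter> Tcone M'))"
proof
  assume R: "ROG (Scone M)"
  show "\<forall>M'. M' \<noteq> {} \<and> M' \<subseteq> M \<longrightarrow> ROG (Scone M \<inter> Tcone M')"
  proof (intro allI impI)
    fix M' assume M': "M' \<noteq> {} \<and> M' \<subseteq> M"
    let ?S = "Scone M \<inter> Tcone M'"
    let ?K = "?S \<inter> rank_one_mats"
    have props: "closed ?S" "convex ?S" "cone ?S"
      unfolding Scone_Tcone by (rule closed_Scone, rule convex_Scone, rule cone_Scone)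
    have psub: "?S \<subseteq> psd_cone" unfolding Scone_def by auto
    have "?S \<subseteq> convex hull ?K"
    proof
      fix X assume X: "X \<in> ?S"
      have xS: "X \<in> Scone M" using X by blast
      have "X \<in> convex hull (Scone M \<inter> rank_one_mats)" by (rule ROG_D[OF R xS])
      then obtain S u where Su: "finite S" "S \<subseteq> Scone M \<inter> rank_one_mats" "\<forall>x\<in>S. 0 \<le> u x"
        "sum u S = 1" "(\<Sum>v\<in>S. u v *\<^sub>R v) = X"
        unfolding convex_hull_explicit by blast
      define S0 where "S0 = {w\<in>S. u w \<noteq> 0}"
      have fS0: "finite S0" using Su(1) S0_def by simp
      have S0S: "S0 \<subseteq> S" unfolding S0_def by blast
      have zero: "frob A w = 0" if A: "A \<in> M'" and w: "w \<in> S0" for A w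
      proof -
        have AM: "A \<in> M" using A M' by blast
        have X0: "frob A X = 0" using X A unfolding Tcone_def by blast
        have "frob A X = frob A (\<Sum>v\<in>S. u v *\<^sub>R v)" using Su(5) by simp
        also have "\<dots> = (\<Sum>v\<in>S. u v * frob A v)" by (rule frob_sum)
        finally have s0: "(\<Sum>v\<in>S. u v * frob A v) = 0" using X0 by simp
        have nn: "\<And>v. v \<in> S \<Longrightarrow> 0 \<le> u v * frob A v"
        proof -
          fix v assume v: "v \<in> S"
          then have "v \<in> Scone M" using Su(2) by blast
          then have "0 \<le> frob A v" using AM unfolding Scone_def by blast
          then show "0 \<le> u v * frob A v" using Su(3) v by simp
        qed
        have all0: "\<forall>v\<in>S. u v * frob A v = 0"
          using sum_nonneg_eq_0_iff[OF Su(1), of "\<lambda>v. u v * frob A v"] nn s0 by simp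
        have wS: "w \<in> S" "u w \<noteq> 0" using w unfolding S0_def by auto
        then show ?thesis using all0 by auto
      qed
      have S0K: "S0 \<subseteq> ?K"
      proof
        fix w assume w: "w \<in> S0"
        then have wS: "w \<in> Scone M" "w \<in> rank_one_mats" using S0S Su(2) by auto
        then have "w \<in> Tcone M'" using zero w unfolding Tcone_def Scone_def by blast
        then show "w \<in> ?K" using wS by blast
      qed
      have "sum u S = sum u S0"
        by (rule sum.mono_neutral_right[OF Su(1) S0S]) (simp add: S0_def)
      then have sum1: "sum u S0 = 1" using Su(4) by simp
      have "(\<Sum>v\<in>S. u v *\<^sub>R v) = (\<Sum>v\<in>S0. u v *\<^sub>R v)"
        by (rule sum.mono_neutral_right[OF Su(1) S0S]) (simp add: S0_def)
      then have sumX: "(\<Sum>v\<in>S0. u v *\<^sub>R v) = X" using Su(5) by simp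
      have "(\<Sum>v\<in>S0. u v *\<^sub>R v) \<in> convex hull ?K"
      proof (rule convex_sum[OF fS0 convex_convex_hull sum1])
        show "\<And>i. i \<in> S0 \<Longrightarrow> 0 \<le> u i" using Su(3) S0S by blast
        show "\<And>i. i \<in> S0 \<Longrightarrow> i \<in> convex hull ?K" using S0K by (blast intro: hull_inc)
      qed
      then show "X \<in> convex hull ?K" using sumX by simp
    qed
    then show "ROG ?S" using props psub by (intro ROG_intro)
  qed
next
  assume H: "\<forall>M'. M' \<noteq> {} \<and> M' \<subseteq> M \<longrightarrow> ROG (Scone M \<inter> Tcone M')"
  let ?S = "Scone M"
  let ?K = "?S \<inter> rank_one_mats"
  have "?S \<subseteq> convex hull ?K"
  proof
    fix X assume X: "X \<in> ?S"
    then have "X \<in> psd_cone" unfolding Scone_def by auto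
    then obtain vs where "X = sum_list (map outer vs)" using psd_decomp by blast
    then show "X \<in> convex hull ?K" using list_main[OF assms(2) H] X by simp
  qed
  moreover have "?S \<subseteq> psd_cone" unfolding Scone_def by auto
  ultimately show "ROG ?S" using closed_Scone convex_Scone cone_Scone by (intro ROG_intro)
qed

end
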